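(* Let $d\in\mathbb{N}$, $G=\mathbb{Z}_{12d+4}$, $H=\{0,3d+1,6d+2,9d+3\}$ and $K=\{0,6d+2\}$. Let $a_1+H,\dots,a_{3d}+H$ be the cosets of $H$ in $G$ other than $H$ itself. Form a family $S'$ of $6d$ two-element sets as follows: for each $1\le i\le d$, split $a_i+H$ into the two cosets $a_i+K$ and $b_i+K$ of $K$, where $b_i=a_i+(3d+1)$; for each $d+1\le j\le 3d$, split $a_j+H$ into two disjoint subsets $B_j$ and $C_j$, each of the form $\{x,y\}$ with $y-x=3d+1$. Then $S'$ is a $(12d+4,6d,2,0,4d)$-DPDF and a $(12d+4,6d,2,12d-4,8d)$-EPDF in $G$.
   Context: In an additive group $G$ with identity $0$, let $G^*=G\setminus\{0\}$. For $D\subseteq G$, $\Delta(D)$ is the multiset $\{x-y:x,y\in D,x\ne y\}$; for $D_1,D_2\subseteq G$, $\Delta(D_1,D_2)$ is the multiset $\{x-y:x\in D_1,y\in D_2\}$. For a family $A=\{A_1,\dots,A_s\}$ of pairwise disjoint subsets, ${\rm Int}(A)=\bigcup_i\Delta(A_i)$ and ${\rm Ext}(A)=\bigcup_{i\ne j}\Delta(A_i,A_j)$ (multiset unions). For $|G|=v$, a $(v,s,k,\lambda,\mu)$-DPDF is a family of $s$ pairwise disjoint $k$-subsets of $G^*$ with union $S$ such that ${\rm Int}(A)$ contains each element of $S$ exactly $\lambda$ times and each element of $G\setminus(S\cup\{0\})$ exactly $\mu$ times; a $(v,s,k,\lambda,\mu)$-EPDF is defined the same way using ${\rm Ext}(A)$.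 *)

theory Defs
  imports Main
begin

text \<open>The cyclic group Z_n is modelled by the carrier {0..<n} of integers,
  with addition and subtraction taken mod n. Its identity is 0.\<close>

definition zcar :: "int \<Rightarrow> int set" where
  "zcar n = {0..<n}"

definition ztrans :: "int \<Rightarrow> int \<Rightarrow> int set \<Rightarrow> int set" where
  "ztrans n a X = (\<lambda>x. (a + x) mod n) ` X"

text \<open>Multiplicity of g in Int(A) = union of Delta(B), B in A.\<close>
definition int_mult :: "int \<Rightarrow> int set set \<Rightarrow> int \<Rightarrow> nat" where
  "int_mult n A g = (\<Sum>B\<in>A. card {(x, y). x \<in> B \<and> y \<in> B \<and> x \<noteq> y \<and> (x - y) mod n = g})"

text \<open>Multiplicity of g in Ext(A) = union of Delta(B,C), B, C distinct members of A.\<close>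
definition ext_mult :: "int \<Rightarrow> int set set \<Rightarrow> int \<Rightarrow> nat" where
  "ext_mult n A g = (\<Sum>(B, C)\<in>{(B, C). B \<in> A \<and> C \<in> A \<and> B \<noteq> C}.
                        card {(x, y). x \<in> B \<and> y \<in> C \<and> (x - y) mod n = g})"

definition pdf_family :: "int \<Rightarrow> nat \<Rightarrow> nat \<Rightarrow> int set set \<Rightarrow> bool" where
  "pdf_family n s k A \<longleftrightarrow> finite A \<and> card A = s \<and>
     (\<forall>B\<in>A. B \<subseteq> zcar n - {0} \<and> card B = k) \<and>
     (\<forall>B\<in>A. \<forall>C\<in>A. B \<noteq> C \<longrightarrow> B \<inter> C = {})"

definition DPDF :: "int \<Rightarrow> nat \<Rightarrow> nat \<Rightarrow> nat \<Rightarrow> nat \<Rightarrow> int set set \<Rightarrow> bool" where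
  "DPDF n s k lam mu A \<longleftrightarrow> pdf_family n s k A \<and>
     (\<forall>g\<in>\<Union>A. int_mult n A g = lam) \<and>
     (\<forall>g\<in>zcar n - (\<Union>A \<union> {0}). int_mult n A g = mu)"

definition EPDF :: "int \<Rightarrow> nat \<Rightarrow> nat \<Rightarrow> nat \<Rightarrow> nat \<Rightarrow> int set set \<Rightarrow> bool" where
  "EPDF n s k lam mu A \<longleftrightarrow> pdf_family n s k A \<and>
     (\<forall>g\<in>\<Union>A. ext_mult n A g = lam) \<and>
     (\<forall>g\<in>zcar n - (\<Union>A \<union> {0}). ext_mult n A g = mu)"

end

theory Submission
  imports Defs
begin

definition Cos :: "int \<Rightarrow> int \<Rightarrow> int \<Rightarrow> int set" where
  "Cos n h r = {x \<in> {0..<n}. x mod h = r}"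

lemma mod4: "(0::int) < h \<Longrightarrow> (x mod (4*h)) mod h = x mod h"
  by (simp add: mod_mod_cancel)

lemma cos_explicit:
  assumes "(0::int) < h" "0 \<le> r" "r < h"
  shows "Cos (4*h) h r = {r, r+h, r+2*h, r+3*h}"
proof
  show "{r, r+h, r+2*h, r+3*h} \<subseteq> Cos (4*h) h r"
    using assms by (auto simp: Cos_def)
  show "Cos (4*h) h r \<subseteq> {r, r+h, r+2*h, r+3*h}"
  proof
    fix x assume "x \<in> Cos (4*h) h r"
    hence x: "0 \<le> x" "x < 4*h" "x mod h = r" by (auto simp: Cos_def)
    define q where "q = x div h"
    have xe: "x = q*h + r" using x(3) q_def by (metis mult_div_mod_eq mult.commute)
    have "q \<ge> 0" using x assms q_def by (simp add: pos_imp_zdiv_nonneg_iff)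
    moreover have "q < 4"
    proof (rule ccontr)
      assume "\<not> q < 4"
      hence "4*h \<le> q*h" using assms by (simp add: mult_right_mono)
      thus False using xe x assms by linarith
    qed
    ultimately have "q = 0 \<or> q = 1 \<or> q = 2 \<or> q = 3" by auto
    thus "x \<in> {r, r+h, r+2*h, r+3*h}" using xe by auto
  qed
qed

lemma cos_card:
  assumes "(0::int) < h" "0 \<le> r" "r < h"
  shows "card (Cos (4*h) h r) = 4"
  using assms by (simp add: cos_explicit)

lemma mod_shift_ne:
  assumes "(0::int) < h" "\<not> (4::int) dvd (k - l)"
  shows "(a + k*h) mod (4*h) \<noteq> (a + l*h) mod (4*h)"
proof
  assume "(a + k*h) mod (4*h) = (a + l*h) mod (4*h)"
  hence "4*h dvd (a + k*h) - (a + l*h)" by (simp add: mod_eq_dvd_iff)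
  moreover have "(a + k*h) - (a + l*h) = (k - l) * h" by (simp add: algebra_simps)
  ultimately have "4*h dvd (k-l)*h" by simp
  hence "4 dvd (k-l)" using assms(1) by simp
  thus False using assms(2) by simp
qed

lemma ztrans_H:
  assumes "(0::int) < h"
  shows "ztrans (4*h) a {0,h,2*h,3*h} = Cos (4*h) h (a mod h)"
proof (rule card_subset_eq)
  show "finite (Cos (4*h) h (a mod h))" unfolding Cos_def by (rule finite_subset[of _ "{0..<4*h}"]) auto
  show "ztrans (4*h) a {0,h,2*h,3*h} \<subseteq> Cos (4*h) h (a mod h)"
    using assms by (auto simp: ztrans_def Cos_def mod4)
  have e: "ztrans (4*h) a {0,h,2*h,3*h} = {(a+0*h) mod (4*h), (a+1*h) mod (4*h), (a+2*h) mod (4*h), (a+3*h) mod (4*h)}"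
    by (simp add: ztrans_def)
  have "card {(a+0*h) mod (4*h), (a+1*h) mod (4*h), (a+2*h) mod (4*h), (a+3*h) mod (4*h)} = 4"
    apply (subst card_insert_disjoint, simp, use mod_shift_ne[OF assms, of 0 1 a] mod_shift_ne[OF assms, of 0 2 a] mod_shift_ne[OF assms, of 0 3 a] in simp)
    apply (subst card_insert_disjoint, simp, use mod_shift_ne[OF assms, of 1 2 a] mod_shift_ne[OF assms, of 1 3 a] in simp)
    apply (subst card_insert_disjoint, simp, use mod_shift_ne[OF assms, of 2 3 a] in simp)
    by simp
  thus "card (ztrans (4*h) a {0,h,2*h,3*h}) = card (Cos (4*h) h (a mod h))"
    using e cos_card[OF assms, of "a mod h"] assms by simp
qed

lemma PQ:
  assumes "(0::int) < h"
  shows "ztrans (4*h) a {0,2*h} \<union> ztrans (4*h) (a+h) {0,2*h} = ztrans (4*h) a {0,h,2*h,3*h}"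
    and "ztrans (4*h) a {0,2*h} \<inter> ztrans (4*h) (a+h) {0,2*h} = {}"
proof -
  show "ztrans (4*h) a {0,2*h} \<union> ztrans (4*h) (a+h) {0,2*h} = ztrans (4*h) a {0,h,2*h,3*h}"
    by (auto simp: ztrans_def algebra_simps)
  have e1: "ztrans (4*h) a {0,2*h} = {(a+0*h) mod (4*h), (a+2*h) mod (4*h)}" by (simp add: ztrans_def)
  have e2: "ztrans (4*h) (a+h) {0,2*h} = {(a+1*h) mod (4*h), (a+3*h) mod (4*h)}" by (simp add: ztrans_def algebra_simps)
  show "ztrans (4*h) a {0,2*h} \<inter> ztrans (4*h) (a+h) {0,2*h} = {}"
    unfolding e1 e2 using mod_shift_ne[OF assms, of 0 1 a] mod_shift_ne[OF assms, of 0 3 a]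
      mod_shift_ne[OF assms, of 2 1 a] mod_shift_ne[OF assms, of 2 3 a]
    by auto
qed

lemma pair_count:
  assumes "(x::int) \<noteq> y"
  shows "card {(u,v). u \<in> {x,y} \<and> v \<in> {x,y} \<and> u \<noteq> v \<and> (u - v) mod n = g}
       = (if (x-y) mod n = g then 1 else 0) + (if (y-x) mod n = g then 1 else 0)"
proof -
  have "{(u,v). u \<in> {x,y} \<and> v \<in> {x,y} \<and> u \<noteq> v \<and> (u - v) mod n = g}
     = (if (x-y) mod n = g then {(x,y)} else {}) \<union> (if (y-x) mod n = g then {(y,x)} else {})"
    using assms by auto
  thus ?thesis using assms by auto
qed

lemma ext_int:
  assumes fin: "finite A" and finB: "\<forall>B\<in>A. finite B"
    and disj: "\<forall>B\<in>A. \<forall>C\<in>A. B \<noteq> C \<longrightarrow> B \<inter> C = {}"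
    and g0: "g \<noteq> 0"
  shows "ext_mult n A g + int_mult n A g
       = card {(x,y). x \<in> \<Union>A \<and> y \<in> \<Union>A \<and> (x - y) mod n = g}"
proof -
  define T where "T = (\<lambda>(B,C). {(x,y). x \<in> B \<and> y \<in> C \<and> (x - y) mod n = g})"
  have U: "{(x,y). x \<in> \<Union>A \<and> y \<in> \<Union>A \<and> (x - y) mod n = g} = (\<Union>p\<in>A\<times>A. T p)"
    by (auto simp: T_def)
  have finT: "\<forall>p\<in>A\<times>A. finite (T p)"
  proof
    fix p assume "p \<in> A \<times> A"
    then obtain B C where p: "p = (B,C)" "B \<in> A" "C \<in> A" by auto
    have "T p \<subseteq> B \<times> C" using p by (auto simp: T_def)
    thus "finite (T p)" using finB p by (meson finite_SigmaI finite_subset)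
  qed
  have dT: "\<forall>p\<in>A\<times>A. \<forall>q\<in>A\<times>A. p \<noteq> q \<longrightarrow> T p \<inter> T q = {}"
  proof (intro ballI impI)
    fix p q assume pq: "p \<in> A\<times>A" "q \<in> A\<times>A" "p \<noteq> q"
    obtain B C B' C' where e: "p = (B,C)" "q = (B',C')" by (cases p, cases q)
    show "T p \<inter> T q = {}"
    proof (cases "B = B'")
      case True
      hence "C \<noteq> C'" using pq e by auto
      hence "C \<inter> C' = {}" using disj pq e by auto
      thus ?thesis using e by (auto simp: T_def)
    next
      case False
      hence "B \<inter> B' = {}" using disj pq e by auto
      thus ?thesis using e by (auto simp: T_def)
    qed
  qed
  have c1: "card (\<Union>p\<in>A\<times>A. T p) = (\<Sum>p\<in>A\<times>A. card (T p))"
    by (rule card_UN_disjoint) (use fin finT dT in auto)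
  define Off where "Off = {(B, C). B \<in> A \<and> C \<in> A \<and> B \<noteq> C}"
  define Dg where "Dg = {(B, C). B \<in> A \<and> C \<in> A \<and> B = C}"
  have AA: "A \<times> A = Off \<union> Dg" "Off \<inter> Dg = {}" by (auto simp: Off_def Dg_def)
  have finO: "finite Off" "finite Dg" using fin by (auto intro: finite_subset[of _ "A\<times>A"] simp: Off_def Dg_def)
  have "(\<Sum>p\<in>A\<times>A. card (T p)) = (\<Sum>p\<in>Off. card (T p)) + (\<Sum>p\<in>Dg. card (T p))"
    unfolding AA(1) by (rule sum.union_disjoint) (use finO AA in auto)
  moreover have "(\<Sum>p\<in>Off. card (T p)) = ext_mult n A g"
    unfolding ext_mult_def Off_def T_def by (rule sum.cong) auto
  moreover have "(\<Sum>p\<in>Dg. card (T p)) = int_mult n A g"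
  proof -
    have "Dg = (\<lambda>B. (B,B)) ` A" by (auto simp: Dg_def)
    hence "(\<Sum>p\<in>Dg. card (T p)) = (\<Sum>B\<in>A. card (T (B,B)))"
      by (simp add: sum.reindex inj_on_def)
    also have "\<dots> = int_mult n A g"
      unfolding int_mult_def T_def
    proof (rule sum.cong)
      fix B assume "B \<in> A"
      have "{(x,y). x \<in> B \<and> y \<in> B \<and> (x - y) mod n = g} = {(x, y). x \<in> B \<and> y \<in> B \<and> x \<noteq> y \<and> (x - y) mod n = g}"
        using g0 by auto
      thus "card (case (B, B) of (B, C) \<Rightarrow> {(x, y). x \<in> B \<and> y \<in> C \<and> (x - y) mod n = g}) =
         card {(x, y). x \<in> B \<and> y \<in> B \<and> x \<noteq> y \<and> (x - y) mod n = g}" by simp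
    qed simp
    finally show ?thesis .
  qed
  ultimately show ?thesis using U c1 by simp
qed

lemma sum_split:
  "(\<Sum>i\<in>{1..3*d}. if i \<le> d then (\<alpha>::nat) else \<beta>) = d*\<alpha> + 2*d*\<beta>"
proof -
  have "{1..3*d} = {1..d} \<union> {d+1..3*d}" by auto
  hence "(\<Sum>i\<in>{1..3*d}. if i \<le> d then \<alpha> else \<beta>) = (\<Sum>i\<in>{1..d}. if i \<le> d then \<alpha> else \<beta>) + (\<Sum>i\<in>{d+1..3*d}. if i \<le> d then \<alpha> else \<beta>)"
    by (simp add: sum.union_disjoint)
  also have "\<dots> = (\<Sum>i\<in>{1..d}. \<alpha>) + (\<Sum>i\<in>{d+1..3*d}. \<beta>)"
    by (intro arg_cong2[where f="(+)"] sum.cong) auto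
  finally show ?thesis by simp
qed

lemma pair_count_U:
  fixes n h g :: int and U :: "int set"
  assumes "0 < n" "U \<subseteq> {0..<n}" "0 \<le> g" "g < n"
  shows "card {(x,y). x \<in> U \<and> y \<in> U \<and> (x - y) mod n = g} = card {x \<in> U. (x - g) mod n \<in> U}"
proof -
  have "{(x,y). x \<in> U \<and> y \<in> U \<and> (x - y) mod n = g} = (\<lambda>x. (x, (x - g) mod n)) ` {x \<in> U. (x - g) mod n \<in> U}"
  proof (rule set_eqI, rule iffI)
    fix p assume "p \<in> {(x,y). x \<in> U \<and> y \<in> U \<and> (x - y) mod n = g}"
    then obtain x y where xy: "p = (x,y)" "x \<in> U" "y \<in> U" "g = (x - y) mod n" by auto
    have "(x - (x - y) mod n) mod n = y"
      using xy assms by (auto simp add: mod_diff_right_eq subset_iff)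
    thus "p \<in> (\<lambda>x. (x, (x - g) mod n)) ` {x \<in> U. (x - g) mod n \<in> U}"
      using xy by (auto intro!: image_eqI[of _ _ x])
  next
    fix p assume "p \<in> (\<lambda>x. (x, (x - g) mod n)) ` {x \<in> U. (x - g) mod n \<in> U}"
    then obtain x where x: "p = (x, (x - g) mod n)" "x \<in> U" "(x - g) mod n \<in> U" by auto
    have "(x - (x - g) mod n) mod n = g" using assms by (simp add: mod_diff_right_eq)
    thus "p \<in> {(x,y). x \<in> U \<and> y \<in> U \<and> (x - y) mod n = g}" using x by auto
  qed
  moreover have "inj_on (\<lambda>x. (x, (x - g) mod n)) {x \<in> U. (x - g) mod n \<in> U}" by (simp add: inj_on_def)
  ultimately show ?thesis by (simp add: card_image)
qed

lemma general:
  fixes d :: nat and h :: int and a :: "nat \<Rightarrow> int" and B C :: "nat \<Rightarrow> int set"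
  assumes hdef: "h = 3*int d + 1" and d_pos: "d \<ge> 1"
    and a_nontriv: "\<forall>i\<in>{1..3*d}. ztrans (4*h) (a i) {0,h,2*h,3*h} \<noteq> {0,h,2*h,3*h}"
    and a_distinct: "inj_on (\<lambda>i. ztrans (4*h) (a i) {0,h,2*h,3*h}) {1..3*d}"
    and BC_split: "\<forall>j\<in>{d+1..3*d}. B j \<union> C j = ztrans (4*h) (a j) {0,h,2*h,3*h} \<and> B j \<inter> C j = {}"
    and B_form: "\<forall>j\<in>{d+1..3*d}. \<exists>x y. B j = {x, y} \<and> (y - x) mod (4*h) = h"
    and C_form: "\<forall>j\<in>{d+1..3*d}. \<exists>x y. C j = {x, y} \<and> (y - x) mod (4*h) = h"
  shows "DPDF (4*h) (6*d) 2 0 (4*d)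
           ((\<Union>i\<in>{1..d}. {ztrans (4*h) (a i) {0, 2*h}, ztrans (4*h) (a i + h) {0, 2*h}})
            \<union> (\<Union>j\<in>{d+1..3*d}. {B j, C j}))
       \<and> EPDF (4*h) (6*d) 2 (12*d-4) (8*d)
           ((\<Union>i\<in>{1..d}. {ztrans (4*h) (a i) {0, 2*h}, ztrans (4*h) (a i + h) {0, 2*h}})
            \<union> (\<Union>j\<in>{d+1..3*d}. {B j, C j}))"
proof -
  define Fam where "Fam = ((\<Union>i\<in>{1..d}. {ztrans (4*h) (a i) {0, 2*h}, ztrans (4*h) (a i + h) {0, 2*h}})
            \<union> (\<Union>j\<in>{d+1..3*d}. {B j, C j}))"
  define I where "I = {1..3*d}"
  have hpos: "0 < h" using hdef by simp
  have Hs: "{0,h,2*h,3*h} = Cos (4*h) h 0" using cos_explicit[OF hpos, of 0] hpos by simp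
  define r where "r = (\<lambda>i. a i mod h)"
  have co: "\<And>i. ztrans (4*h) (a i) {0,h,2*h,3*h} = Cos (4*h) h (r i)"
    unfolding r_def by (rule ztrans_H[OF hpos])
  have r_rng: "\<And>i. 0 \<le> r i \<and> r i < h" unfolding r_def using hpos by simp
  have r_nz: "\<And>i. i \<in> I \<Longrightarrow> r i \<noteq> 0"
  proof
    fix i assume i: "i \<in> I" and "r i = 0"
    hence "ztrans (4*h) (a i) {0,h,2*h,3*h} = Cos (4*h) h 0" using co[of i] by simp
    hence "ztrans (4*h) (a i) {0,h,2*h,3*h} = {0,h,2*h,3*h}" using Hs by (rule trans[OF _ sym])
    moreover have "i \<in> {1..3*d}" using i by (simp add: I_def)
    ultimately show False using a_nontriv by blast
  qed
  have r_inj: "inj_on r I"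
  proof (rule inj_onI)
    fix i j assume ij: "i \<in> I" "j \<in> I" "r i = r j"
    have "ztrans (4*h) (a i) {0,h,2*h,3*h} = ztrans (4*h) (a j) {0,h,2*h,3*h}"
      unfolding co using ij(3) by (rule arg_cong)
    thus "i = j" using inj_onD[OF a_distinct] ij(1,2) unfolding I_def by blast
  qed
  have r_img: "r ` I = {1..int (3*d)}"
  proof (rule card_subset_eq)
    show "finite {1..int (3*d)}" by simp
    show "r ` I \<subseteq> {1..int (3*d)}"
    proof
      fix z assume "z \<in> r ` I"
      then obtain i where "i \<in> I" "z = r i" by auto
      thus "z \<in> {1..int (3*d)}" using r_nz r_rng[of i] hdef by force
    qed
    show "card (r ` I) = card {1..int (3*d)}"
      using card_image[OF r_inj] by (simp add: I_def)
  qed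
  define U where "U = {x \<in> {0..<4*h}. x mod h \<noteq> 0}"
  have cover: "\<And>x. x \<in> U \<Longrightarrow> \<exists>i\<in>I. x \<in> Cos (4*h) h (r i)"
  proof -
    fix x assume x: "x \<in> U"
    have "x mod h \<in> {1..int (3*d)}" using x hpos hdef unfolding U_def
    proof -
      have "0 \<le> x mod h" "x mod h < h" "x mod h \<noteq> 0" using x hpos by (auto simp: U_def)
      thus ?thesis using hdef by (simp only: atLeastAtMost_iff) linarith
    qed
    then obtain i where "i \<in> I" "x mod h = r i" using r_img by (metis imageE)
    thus "\<exists>i\<in>I. x \<in> Cos (4*h) h (r i)" using x by (auto simp: U_def Cos_def)
  qed
  have Cos_sub_U: "\<And>i. i \<in> I \<Longrightarrow> Cos (4*h) h (r i) \<subseteq> U"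
    using r_nz by (auto simp: U_def Cos_def)
  define S where "S = (\<lambda>(i::nat,b::bool). if i \<le> d then (if b then ztrans (4*h) (a i + h) {0,2*h}
      else ztrans (4*h) (a i) {0,2*h}) else (if b then C i else B i))"
  define Idx where "Idx = I \<times> (UNIV :: bool set)"
  have Fam_eq: "Fam = S ` Idx"
  proof
    show "Fam \<subseteq> S ` Idx"
    proof
      fix X assume "X \<in> Fam"
      then consider (P) i where "i \<in> {1..d}" "X = ztrans (4*h) (a i) {0, 2*h}"
        | (Q) i where "i \<in> {1..d}" "X = ztrans (4*h) (a i + h) {0, 2*h}"
        | (B) i where "i \<in> {d+1..3*d}" "X = B i"
        | (C) i where "i \<in> {d+1..3*d}" "X = C i"
        unfolding Fam_def by blast
      thus "X \<in> S ` Idx"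
      proof cases
        case P thus ?thesis by (intro image_eqI[of _ _ "(i,False)"]) (auto simp: S_def Idx_def I_def)
      next
        case Q thus ?thesis by (intro image_eqI[of _ _ "(i,True)"]) (auto simp: S_def Idx_def I_def)
      next
        case B thus ?thesis by (intro image_eqI[of _ _ "(i,False)"]) (auto simp: S_def Idx_def I_def)
      next
        case C thus ?thesis by (intro image_eqI[of _ _ "(i,True)"]) (auto simp: S_def Idx_def I_def)
      qed
    qed
    show "S ` Idx \<subseteq> Fam"
    proof
      fix X assume "X \<in> S ` Idx"
      then obtain i b where ib: "i \<in> I" "X = S (i,b)" by (auto simp: Idx_def)
      show "X \<in> Fam"
      proof (cases "i \<le> d")
        case True
        hence "i \<in> {1..d}" using ib by (auto simp: I_def)
        thus ?thesis using ib True unfolding Fam_def S_def by (cases b) auto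
      next
        case False
        hence "i \<in> {d+1..3*d}" using ib by (auto simp: I_def)
        thus ?thesis using ib False unfolding Fam_def S_def by (cases b) auto
      qed
    qed
  qed
  have Sunion: "\<And>i. i \<in> I \<Longrightarrow> S (i,False) \<union> S (i,True) = Cos (4*h) h (r i)"
  proof -
    fix i assume i: "i \<in> I"
    show "S (i,False) \<union> S (i,True) = Cos (4*h) h (r i)"
    proof (cases "i \<le> d")
      case True thus ?thesis using PQ(1)[OF hpos, of "a i"] co[of i] by (simp add: S_def)
    next
      case False
      hence "i \<in> {d+1..3*d}" using i by (auto simp: I_def)
      thus ?thesis using False BC_split co[of i] by (simp add: S_def)
    qed
  qed
  have Sdisj2: "\<And>i. i \<in> I \<Longrightarrow> S (i,False) \<inter> S (i,True) = {}"
  proof -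
    fix i assume i: "i \<in> I"
    show "S (i,False) \<inter> S (i,True) = {}"
    proof (cases "i \<le> d")
      case True thus ?thesis using PQ(2)[OF hpos, of "a i"] by (simp add: S_def)
    next
      case False
      hence "i \<in> {d+1..3*d}" using i by (auto simp: I_def)
      thus ?thesis using False BC_split by (simp add: S_def)
    qed
  qed
  have Ssub: "\<And>p. p \<in> Idx \<Longrightarrow> S p \<subseteq> Cos (4*h) h (r (fst p))"
  proof -
    fix p assume p: "p \<in> Idx"
    obtain i b where e: "p = (i,b)" by (cases p)
    have "i \<in> I" using p e by (auto simp: Idx_def)
    thus "S p \<subseteq> Cos (4*h) h (r (fst p))" using Sunion[of i] e by (cases b) auto
  qed
  have Sform: "\<And>p. p \<in> Idx \<Longrightarrow> \<exists>x y. S p = {x,y} \<and> (y - x) mod (4*h) = (if fst p \<le> d then 2*h else h)"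
  proof -
    fix p assume p: "p \<in> Idx"
    obtain i b where e: "p = (i,b)" by (cases p)
    have i: "i \<in> I" using p e by (auto simp: Idx_def)
    show "\<exists>x y. S p = {x,y} \<and> (y - x) mod (4*h) = (if fst p \<le> d then 2*h else h)"
    proof (cases "i \<le> d")
      case True
      define c where "c = (if b then a i + h else a i)"
      have "S p = ztrans (4*h) c {0,2*h}" using True e by (simp add: S_def c_def)
      also have "\<dots> = {c mod (4*h), (c + 2*h) mod (4*h)}" by (simp add: ztrans_def)
      finally have 1: "S p = {c mod (4*h), (c + 2*h) mod (4*h)}" .
      have "((c + 2*h) mod (4*h) - c mod (4*h)) mod (4*h) = (c + 2*h - c) mod (4*h)"
        by (simp add: mod_diff_eq)
      also have "\<dots> = 2*h" using hpos by simp
      finally show ?thesis using 1 True e by auto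
    next
      case False
      hence "i \<in> {d+1..3*d}" using i by (auto simp: I_def)
      thus ?thesis using False B_form C_form e by (cases b) (auto simp: S_def)
    qed
  qed
  have Sdisj: "\<And>p q. p \<in> Idx \<Longrightarrow> q \<in> Idx \<Longrightarrow> p \<noteq> q \<Longrightarrow> S p \<inter> S q = {}"
  proof -
    fix p q assume pq: "p \<in> Idx" "q \<in> Idx" "p \<noteq> q"
    obtain i b j c where e: "p = (i,b)" "q = (j,c)" by (cases p, cases q)
    have ij: "i \<in> I" "j \<in> I" using pq e by (auto simp: Idx_def)
    show "S p \<inter> S q = {}"
    proof (cases "i = j")
      case True
      hence "b \<noteq> c" using pq e by auto
      thus ?thesis using Sdisj2[OF ij(1)] e True by (cases b; cases c) auto
    next
      case False
      hence "r i \<noteq> r j" using r_inj ij by (meson inj_onD)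
      hence "Cos (4*h) h (r i) \<inter> Cos (4*h) h (r j) = {}" by (auto simp: Cos_def)
      thus ?thesis using Ssub[OF pq(1)] Ssub[OF pq(2)] e by auto
    qed
  qed
  have hne: "h \<noteq> 2*h" "h \<noteq> 3*h" "2*h \<noteq> 3*h" "h \<noteq> 0" "2*h \<noteq> 0" using hpos by auto
  have Scard: "\<And>p. p \<in> Idx \<Longrightarrow> card (S p) = 2"
  proof -
    fix p assume p: "p \<in> Idx"
    then obtain x y where xy: "S p = {x,y}" "(y - x) mod (4*h) = (if fst p \<le> d then 2*h else h)"
      using Sform by blast
    have "x \<noteq> y" using xy(2) hne by (auto split: if_splits)
    thus "card (S p) = 2" using xy by simp
  qed
  have S_inj: "inj_on S Idx"
  proof (rule inj_onI, rule ccontr)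
    fix p q assume pq: "p \<in> Idx" "q \<in> Idx" "S p = S q" "p \<noteq> q"
    hence "S p = {}" using Sdisj[OF pq(1,2,4)] by simp
    thus False using Scard[OF pq(1)] by simp
  qed
  have finI: "finite I" by (simp add: I_def)
  have sumS: "\<And>f. sum f Fam = (\<Sum>i\<in>I. f (S (i,False)) + f (S (i,True)))"
  proof -
    fix f :: "int set \<Rightarrow> 'b::comm_monoid_add"
    have "sum f Fam = sum (f \<circ> S) Idx" unfolding Fam_eq by (rule sum.reindex[OF S_inj])
    also have "\<dots> = (\<Sum>i\<in>I. \<Sum>b\<in>UNIV. f (S (i,b)))"
      unfolding Idx_def by (simp add: sum.cartesian_product)
    also have "\<dots> = (\<Sum>i\<in>I. f (S (i,False)) + f (S (i,True)))" by (simp add: UNIV_bool add.commute)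
    finally show "sum f Fam = (\<Sum>i\<in>I. f (S (i,False)) + f (S (i,True)))" .
  qed
  have UF: "\<Union>Fam = U"
  proof
    show "\<Union>Fam \<subseteq> U" unfolding Fam_eq Idx_def using Ssub Cos_sub_U by (fastforce simp: Idx_def)
    show "U \<subseteq> \<Union>Fam"
    proof
      fix x assume "x \<in> U"
      then obtain i where i: "i \<in> I" "x \<in> Cos (4*h) h (r i)" using cover by blast
      hence "x \<in> S (i,False) \<or> x \<in> S (i,True)" using Sunion by blast
      moreover have "(i,False) \<in> Idx" "(i,True) \<in> Idx" using i by (auto simp: Idx_def)
      ultimately show "x \<in> \<Union>Fam" unfolding Fam_eq by blast
    qed
  qed
  have finFam: "finite Fam" unfolding Fam_eq Idx_def using finI by simp
  have fam: "pdf_family (4*h) (6*d) 2 Fam"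
    unfolding pdf_family_def
  proof (intro conjI ballI impI)
    show "finite Fam" by (rule finFam)
    show "card Fam = 6*d" unfolding Fam_eq using card_image[OF S_inj] by (simp add: Idx_def I_def)
    fix X assume X: "X \<in> Fam"
    have "X \<subseteq> U" using X UF by blast
    thus "X \<subseteq> zcar (4*h) - {0}" by (auto simp: U_def zcar_def)
    show "card X = 2" using X Scard unfolding Fam_eq by auto
    fix Y assume "Y \<in> Fam" "X \<noteq> Y"
    moreover obtain p q where "p \<in> Idx" "q \<in> Idx" "X = S p" "Y = S q" using X \<open>Y \<in> Fam\<close> unfolding Fam_eq by blast
    ultimately show "X \<inter> Y = {}" using Sdisj by blast
  qed
  have finmem: "\<forall>X\<in>Fam. finite X" using fam unfolding pdf_family_def by (metis card.infinite zero_neq_numeral)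
  have disjmem: "\<forall>X\<in>Fam. \<forall>Y\<in>Fam. X \<noteq> Y \<longrightarrow> X \<inter> Y = {}" using fam unfolding pdf_family_def by auto
  define cnt where "cnt = (\<lambda>g::int. \<lambda>X::int set. card {(x, y). x \<in> X \<and> y \<in> X \<and> x \<noteq> y \<and> (x - y) mod (4*h) = g})"
  have pc: "\<And>p g. p \<in> Idx \<Longrightarrow> cnt g (S p) = (if fst p \<le> d then (if g = 2*h then 2 else 0)
      else (if g = h then 1 else 0) + (if g = 3*h then 1 else 0))"
  proof -
    fix p g assume p: "p \<in> Idx"
    then obtain x y where xy: "S p = {x,y}" "(y - x) mod (4*h) = (if fst p \<le> d then 2*h else h)"
      using Sform by blast
    have "x \<noteq> y" using xy(2) hne by (auto split: if_splits)
    have "(x - y) mod (4*h) = (- (y - x)) mod (4*h)" by simp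
    also have "\<dots> = 4*h - (y - x) mod (4*h)"
    proof -
      have ne0: "(y - x) mod (4*h) \<noteq> 0" using xy(2) hne by auto
      show ?thesis by (simp only: zmod_zminus1_eq_if ne0 if_False)
    qed
    finally have "(x - y) mod (4*h) = (if fst p \<le> d then 2*h else 3*h)" using xy(2) by (cases "fst p \<le> d") auto
    thus "cnt g (S p) = (if fst p \<le> d then (if g = 2*h then 2 else 0)
      else (if g = h then 1 else 0) + (if g = 3*h then 1 else 0))"
      unfolding cnt_def xy(1) pair_count[OF \<open>x \<noteq> y\<close>] using xy(2) hne by auto
  qed
  have intm: "\<And>g. int_mult (4*h) Fam g = d * (if g = 2*h then 4 else 0) + 2*d*((if g = h then 2 else 0) + (if g = 3*h then 2 else 0))"
  proof -
    fix g
    have "int_mult (4*h) Fam g = sum (cnt g) Fam" unfolding int_mult_def cnt_def by simp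
    also have "\<dots> = (\<Sum>i\<in>I. cnt g (S (i,False)) + cnt g (S (i,True)))" by (rule sumS)
    also have "\<dots> = (\<Sum>i\<in>I. if i \<le> d then (if g = 2*h then 4 else 0) else ((if g = h then 2 else 0) + (if g = 3*h then 2 else 0)))"
    proof (rule sum.cong)
      fix i assume "i \<in> I"
      hence "(i,False) \<in> Idx" "(i,True) \<in> Idx" by (auto simp: Idx_def)
      thus "cnt g (S (i,False)) + cnt g (S (i,True)) = (if i \<le> d then (if g = 2*h then 4 else 0) else ((if g = h then 2 else 0) + (if g = 3*h then 2 else 0)))"
        using pc by auto
    qed simp
    also have "\<dots> = d * (if g = 2*h then 4 else 0) + 2*d*((if g = h then 2 else 0) + (if g = 3*h then 2 else 0))"
      unfolding I_def by (rule sum_split)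
    finally show "int_mult (4*h) Fam g = d * (if g = 2*h then 4 else 0) + 2*d*((if g = h then 2 else 0) + (if g = 3*h then 2 else 0))" .
  qed
  have Hcard: "card (Cos (4*h) h 0) = 4" using cos_card[OF hpos, of 0] hpos by simp
  have Ueq: "U = {0..<4*h} - Cos (4*h) h 0" by (auto simp: U_def Cos_def)
  have cardU: "card U = 12*d"
  proof -
    have "card U = card {0..<4*h} - card (Cos (4*h) h 0)" unfolding Ueq
      by (rule card_Diff_subset) (auto simp: Cos_def intro: finite_subset[of _ "{0..<4*h}"])
    thus ?thesis using Hcard hdef by simp
  qed
  have tot: "\<And>g. g \<in> zcar (4*h) \<Longrightarrow> g \<noteq> 0 \<Longrightarrow> ext_mult (4*h) Fam g + int_mult (4*h) Fam g = card {x \<in> U. (x - g) mod (4*h) \<in> U}"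
  proof -
    fix g assume g: "g \<in> zcar (4*h)" "g \<noteq> 0"
    have "ext_mult (4*h) Fam g + int_mult (4*h) Fam g = card {(x,y). x \<in> \<Union>Fam \<and> y \<in> \<Union>Fam \<and> (x - y) mod (4*h) = g}"
      by (rule ext_int[OF finFam finmem disjmem g(2)])
    also have "\<dots> = card {x \<in> U. (x - g) mod (4*h) \<in> U}" unfolding UF
      by (rule pair_count_U) (use hpos g in \<open>auto simp: U_def zcar_def\<close>)
    finally show "ext_mult (4*h) Fam g + int_mult (4*h) Fam g = card {x \<in> U. (x - g) mod (4*h) \<in> U}" .
  qed
  have modU: "\<And>x g. x \<in> {0..<4*h} \<Longrightarrow> ((x - g) mod (4*h) \<in> U \<longleftrightarrow> x mod h \<noteq> g mod h)"
  proof -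
    fix x g :: int
    have "(x - g) mod (4*h) \<in> U \<longleftrightarrow> (x - g) mod h \<noteq> 0" using hpos by (simp add: U_def mod4)
    also have "\<dots> \<longleftrightarrow> x mod h \<noteq> g mod h" by (simp add: mod_eq_dvd_iff dvd_eq_mod_eq_0[symmetric])
    finally show "(x - g) mod (4*h) \<in> U \<longleftrightarrow> x mod h \<noteq> g mod h" .
  qed
  have DP: "DPDF (4*h) (6*d) 2 0 (4*d) Fam"
    unfolding DPDF_def
  proof (intro conjI ballI)
    show "pdf_family (4*h) (6*d) 2 Fam" by (rule fam)
    fix g assume "g \<in> \<Union>Fam"
    hence "g mod h \<noteq> 0" using UF by (auto simp: U_def)
    hence "g \<noteq> h" "g \<noteq> 2*h" "g \<noteq> 3*h" by auto
    thus "int_mult (4*h) Fam g = 0" using intm by simp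
  next
    fix g assume g: "g \<in> zcar (4*h) - (\<Union>Fam \<union> {0})"
    hence "g \<in> Cos (4*h) h 0 - {0}" using UF by (auto simp: U_def zcar_def Cos_def)
    hence "g = h \<or> g = 2*h \<or> g = 3*h" using Hs by auto
    thus "int_mult (4*h) Fam g = 4*d" using intm hne by auto
  qed
  have EP: "EPDF (4*h) (6*d) 2 (12*d-4) (8*d) Fam"
    unfolding EPDF_def
  proof (intro conjI ballI)
    show "pdf_family (4*h) (6*d) 2 Fam" by (rule fam)
    fix g assume "g \<in> \<Union>Fam"
    hence gU: "g \<in> U" using UF by simp
    hence gm: "g mod h \<noteq> 0" "g \<in> zcar (4*h)" "g \<noteq> 0" by (auto simp: U_def zcar_def)
    hence "g \<noteq> h" "g \<noteq> 2*h" "g \<noteq> 3*h" by auto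
    hence i0: "int_mult (4*h) Fam g = 0" using intm by simp
    have "{x \<in> U. (x - g) mod (4*h) \<in> U} = {0..<4*h} - (Cos (4*h) h 0 \<union> Cos (4*h) h (g mod h))"
    proof (rule set_eqI)
      fix x
      show "x \<in> {x \<in> U. (x - g) mod (4*h) \<in> U} \<longleftrightarrow> x \<in> {0..<4*h} - (Cos (4*h) h 0 \<union> Cos (4*h) h (g mod h))"
      proof (cases "x \<in> {0..<4*h}")
        case True
        have mU: "(x - g) mod (4*h) \<in> U \<longleftrightarrow> x mod h \<noteq> g mod h" by (rule modU[OF True])
        show ?thesis unfolding mem_Collect_eq mU using True by (auto simp: U_def Cos_def)
      next
        case False thus ?thesis by (auto simp: U_def)
      qed
    qed
    moreover have "card (Cos (4*h) h 0 \<union> Cos (4*h) h (g mod h)) = 8"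
    proof -
      have f: "\<And>r. finite (Cos (4*h) h r)"
        unfolding Cos_def by (rule finite_subset[of _ "{0..<4*h}"]) auto
      have dj: "Cos (4*h) h 0 \<inter> Cos (4*h) h (g mod h) = {}" using gm(1) by (auto simp: Cos_def)
      have "card (Cos (4*h) h (g mod h)) = 4" using cos_card[OF hpos, of "g mod h"] hpos by simp
      thus ?thesis using card_Un_disjoint[OF f f dj] Hcard by simp
    qed
    moreover have "card ({0..<4*h} - (Cos (4*h) h 0 \<union> Cos (4*h) h (g mod h))) = card {0..<4*h} - card (Cos (4*h) h 0 \<union> Cos (4*h) h (g mod h))"
      by (rule card_Diff_subset) (auto simp: Cos_def intro: finite_subset[of _ "{0..<4*h}"])
    ultimately have "card {x \<in> U. (x - g) mod (4*h) \<in> U} = 12*d - 4" using hdef by simp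
    thus "ext_mult (4*h) Fam g = 12*d-4" using tot[OF gm(2,3)] i0 by simp
  next
    fix g assume g: "g \<in> zcar (4*h) - (\<Union>Fam \<union> {0})"
    hence "g \<in> Cos (4*h) h 0 - {0}" using UF by (auto simp: U_def zcar_def Cos_def)
    hence gC: "g \<in> Cos (4*h) h 0" "g \<noteq> 0" by auto
    have gH1: "g = h \<or> g = 2*h \<or> g = 3*h" using gC Hs[symmetric] by auto
    have gH: "g = h \<or> g = 2*h \<or> g = 3*h" "g mod h = 0" "g \<in> zcar (4*h)" "g \<noteq> 0"
      using gH1 gC g by (auto simp: Cos_def)
    have i4: "int_mult (4*h) Fam g = 4*d" using intm hne gH(1) by auto
    have "{x \<in> U. (x - g) mod (4*h) \<in> U} = U"
    proof (rule set_eqI)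
      fix x
      show "x \<in> {x \<in> U. (x - g) mod (4*h) \<in> U} \<longleftrightarrow> x \<in> U"
      proof (cases "x \<in> {0..<4*h}")
        case True
        have mU: "(x - g) mod (4*h) \<in> U \<longleftrightarrow> x mod h \<noteq> g mod h" by (rule modU[OF True])
        show ?thesis unfolding mem_Collect_eq mU using True gH(2) by (auto simp: U_def)
      next
        case False thus ?thesis by (auto simp: U_def)
      qed
    qed
    thus "ext_mult (4*h) Fam g = 8*d" using tot[OF gH(3,4)] i4 cardU by simp
  qed
  show ?thesis using DP EP unfolding Fam_def by simp
qed

theorem mainTheorem6:
  fixes d :: nat and a :: "nat \<Rightarrow> int" and B C :: "nat \<Rightarrow> int set"
  assumes d_pos: "d \<ge> 1"
    and a_nontriv: "\<forall>i\<in>{1..3*d}.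
          ztrans (12*int d+4) (a i) {0, 3*int d+1, 6*int d+2, 9*int d+3}
            \<noteq> {0, 3*int d+1, 6*int d+2, 9*int d+3}"
    and a_distinct: "inj_on (\<lambda>i. ztrans (12*int d+4) (a i) {0, 3*int d+1, 6*int d+2, 9*int d+3}) {1..3*d}"
    and BC_split: "\<forall>j\<in>{d+1..3*d}.
          B j \<union> C j = ztrans (12*int d+4) (a j) {0, 3*int d+1, 6*int d+2, 9*int d+3} \<and>
          B j \<inter> C j = {}"
    and B_form: "\<forall>j\<in>{d+1..3*d}. \<exists>x y. B j = {x, y} \<and> (y - x) mod (12*int d+4) = 3*int d+1"
    and C_form: "\<forall>j\<in>{d+1..3*d}. \<exists>x y. C j = {x, y} \<and> (y - x) mod (12*int d+4) = 3*int d+1"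
  shows "DPDF (12*int d+4) (6*d) 2 0 (4*d)
           ((\<Union>i\<in>{1..d}. {ztrans (12*int d+4) (a i) {0, 6*int d+2},
                            ztrans (12*int d+4) (a i + (3*int d+1)) {0, 6*int d+2}})
            \<union> (\<Union>j\<in>{d+1..3*d}. {B j, C j}))
       \<and> EPDF (12*int d+4) (6*d) 2 (12*d-4) (8*d)
           ((\<Union>i\<in>{1..d}. {ztrans (12*int d+4) (a i) {0, 6*int d+2},
                            ztrans (12*int d+4) (a i + (3*int d+1)) {0, 6*int d+2}})
            \<union> (\<Union>j\<in>{d+1..3*d}. {B j, C j}))"
proof -
  define h where "h = 3*int d + 1"
  have e: "12*int d+4 = 4*h" "6*int d+2 = 2*h" "9*int d+3 = 3*h" "3*int d+1 = h"
    by (simp_all add: h_def)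
  show ?thesis
    using general[OF h_def d_pos a_nontriv[unfolded e] a_distinct[unfolded e] BC_split[unfolded e]
        B_form[unfolded e] C_form[unfolded e]]
    unfolding e .
qed

end
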